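(* Let $f:\mathbb{R}^n\to\mathbb{R}$ and $a:\mathbb{R}^n\to\mathbb{R}^m$ be twice differentiable on $\mathbb{R}^n$, with parameters $\beta_1\in(0,1)$, $\beta_2\in(0,1)$, $\beta_3\in(\beta_2,1)$, $\beta_4\in(0,1)$, tolerances $\epsilon_{\mathrm{opt}}\in(0,\infty)$, $\epsilon_{\mathrm{far}},\epsilon_{\mathrm{inf}},\epsilon_{\mathrm{unbd}}\in(0,1)$, and $w\in\mathbb{R}^m$, $w\ge0$. Then, started from a point satisfying condition (C), the Simplified One-Phase Algorithm (Algorithm 1) terminates after a finite number of calls to the aggressive step procedure (Algorithm 2); i.e., it cannot make infinitely many calls to Algorithm 2.
   Context: Problem: minimize $f(x)$ subject to $a(x)\le0$. Notation: $e$ all-ones vector, $S=\mathrm{diag}(s)$, $Y=\mathrm{diag}(y)$, $\nabla a(x)$ the $m\times n$ Jacobian. Definitions: $\mathcal{L}_\mu(x,y)=f(x)+(y-\mu\beta_1e)^Ta(x)$; $\psi_\mu(x)=f(x)-\mu\sum_i(\beta_1a_i(x)+\log(\mu w_i-a_i(x)))$; $\phi_\mu(x,s,y)=\psi_\mu(x)+\|Sy-\mu e\|_\infty^3/\mu^2$; $\sigma(y)=100/\max\{100,\|y\|_\infty\}$; $\mathcal{M}=\nabla^2_{xx}\mathcal{L}_\mu(x,y)+\nabla a(x)^TYS^{-1}\nabla a(x)$. Condition (C): $(x,s,y,\mu)\in\mathbb{R}^n\times\mathbb{R}^m_{++}\times\mathbb{R}^m_{++}\times\mathbb{R}_{++}$,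 $s_iy_i/\mu\in[\beta_2,1/\beta_2]$ for all $i$, $a(x)+s=\mu w$. Termination: (T1) $\sigma(y)\|\nabla_x\mathcal{L}_0(x,y)\|_\infty\le\epsilon_{\mathrm{opt}}$, $\sigma(y)\|Sy\|_\infty\le\epsilon_{\mathrm{opt}}$, $\|a(x)+s\|_\infty\le\epsilon_{\mathrm{opt}}$; (T2) $a(x)^Ty>0$, $\|\nabla a(x)^Ty\|_1/(a(x)^Ty)\le\epsilon_{\mathrm{far}}$, $(\|\nabla a(x)^Ty\|_1+s^Ty)/\|y\|_1\le\epsilon_{\mathrm{inf}}$; (T3) $\|x\|_\infty\ge1/\epsilon_{\mathrm{unbd}}$. Aggressive criterion (A): $\sigma(y)\|\nabla_x\mathcal{L}_\mu(x,y)\|_\infty\le\mu$; $\|\nabla_x\mathcal{L}_\mu(x,y)\|_1\le\|\nabla f(x)-\beta_1\mu\nabla a(x)^Te\|_1+s^Ty$; $s_iy_i/\mu\in[\beta_3,1/\beta_3]$ for all $i$. Direction for $\gamma\in[0,1]$ and $\delta\ge0$ with $\mathcal{M}+\delta I\succ0$: $b_D=\nabla_x\mathcal{L}_{\gamma\mu}(x,y)$, $b_P=(1-\gamma)\mu w$, $b_C=Ys-\gamma\mu e$; $(\mathcal{M}+\delta I)d_x=-(b_D+\nabla a(x)^TS^{-1}(Yb_P-b_C))$; $d_y=-S^{-1}Y(\nabla a(x)d_x+b_P-Y^{-1}b_C)$. Update: $\mu^+=(1-(1-\gamma)\alpha_P)\mu$, $x^+=x+\alpha_Pd_x$, $s^+=\mu^+w-a(x^+)$,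 $y^+=y+\alpha_Dd_y$; admissible if $s^+,y^+,\mu^+>0$ and $s^+_iy^+_i/\mu^+\in[\beta_2,1/\beta_2]$ for all $i$. $\theta(\mu,s)=\min\{1/2,\frac{\beta_3-\beta_2}{2\beta_3\mu}\min_{i:w_i>0}s_i/w_i\}$. Algorithm 2 (aggressive step, given $\delta$): direction with $\gamma=0$; largest $\alpha_P\in[0,\min\{1/2,\mu\}]$ with the update admissible for some $\alpha_D\in[0,1]$; then the largest admissible $\alpha_D$; success iff $\alpha_P\ge\theta(\mu,s)$. Algorithm 3 (stabilization step, given $\delta$): direction with $\gamma=1$; largest $\alpha_P=\alpha_D\in[0,1]$ with the update admissible and $\phi_\mu(x^+,s^+,y^+)\le\phi_\mu(x,s,y)+\alpha_P\beta_4(\tfrac12(\nabla\psi_\mu(x)^Td_x-\tfrac\delta2\alpha_P\|d_x\|^2)-\|Sy-\mu e\|_\infty^3/\mu^2)$. Algorithm 1: input $x^0$, $\mu^0,s^0,y^0>0$ with $a(x^0)+s^0=\mu^0w$ and $s^0_iy^0_i/\mu^0\in[\beta_2,1/\beta_2]$. Each iteration: if (T1), (T2) or (T3) holds at the current point, terminate; set $\delta_{\min}=\max\{0,\mu-2\lambda_{\min}(\mathcal{M})\}$; if (A) holds: if $\delta_{\min}=0$ run Algorithm 2 with $\delta=0$ and accept its point if it succeeds; otherwise (or if $\delta_{\min}>0$) run Algorithm 2 with $\delta$ large enough that it succeeds and accept its point; if (A) fails, run Algorithm 3 with $\delta=\delta_{\min}$ and accept its point. *)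

theory Defs
  imports "HOL-Analysis.Analysis"
begin

text \<open>Problem data: objective f with gradient and Hessian, constraint map a with
Jacobian (m x n matrix, rows are gradients of a_i) and constraint Hessians.\<close>
record ('n::finite, 'm::finite) problem =
  obj   :: "real^'n \<Rightarrow> real"
  grad  :: "real^'n \<Rightarrow> real^'n"
  hess  :: "real^'n \<Rightarrow> real^'n^'n"
  con   :: "real^'n \<Rightarrow> real^'m"
  jac   :: "real^'n \<Rightarrow> real^'n^'m"
  chess :: "'m \<Rightarrow> real^'n \<Rightarrow> real^'n^'n"

record ('m::finite) params =
  beta1 :: real
  beta2 :: real
  beta3 :: real
  beta4 :: real
  wv    :: "real^'m"
  eps_opt  :: real
  eps_far  :: real
  eps_inf  :: real
  eps_unbd :: real

type_synonym ('n,'m) state = "(real^'n) \<times> (real^'m) \<times> (real^'m) \<times> real"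

definition ones :: "real^'m::finite" where "ones = (\<chi> i. 1)"

definition diagm :: "real^'m::finite \<Rightarrow> real^'m^'m" where
  "diagm v = (\<chi> i j. if i = j then v$i else 0)"

definition linf :: "real^'m::finite \<Rightarrow> real" where
  "linf v = Max (range (\<lambda>i. \<bar>v$i\<bar>))"

definition l1 :: "real^'m::finite \<Rightarrow> real" where
  "l1 v = (\<Sum>i\<in>UNIV. \<bar>v$i\<bar>)"

definition lmin :: "real^'n::finite^'n \<Rightarrow> real" where
  "lmin M = Inf {l. \<exists>v. v \<noteq> 0 \<and> M *v v = l *\<^sub>R v}"

definition posdef :: "real^'n::finite^'n \<Rightarrow> bool" where
  "posdef M \<longleftrightarrow> (\<forall>v. v \<noteq> 0 \<longrightarrow> v \<bullet> (M *v v) > 0)"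

definition greatest_in :: "real set \<Rightarrow> real \<Rightarrow> bool" where
  "greatest_in S a \<longleftrightarrow> a \<in> S \<and> (\<forall>b\<in>S. b \<le> a)"

text \<open>gradient of L_mu(x,y) = f(x) + (y - mu beta1 e)^T a(x) in x\<close>
definition gradL :: "('n::finite,'m::finite) problem \<Rightarrow> 'm params \<Rightarrow> real \<Rightarrow> real^'n \<Rightarrow> real^'m \<Rightarrow> real^'n" where
  "gradL P prm mu x y = grad P x + transpose (jac P x) *v (y - (mu * beta1 prm) *\<^sub>R ones)"

definition hessL :: "('n::finite,'m::finite) problem \<Rightarrow> 'm params \<Rightarrow> real \<Rightarrow> real^'n \<Rightarrow> real^'m \<Rightarrow> real^'n^'n" where
  "hessL P prm mu x y = hess P x + (\<Sum>i\<in>UNIV. (y$i - mu * beta1 prm) *\<^sub>R chess P i x)"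

definition Mmat :: "('n::finite,'m::finite) problem \<Rightarrow> 'm params \<Rightarrow> real \<Rightarrow> real^'n \<Rightarrow> real^'m \<Rightarrow> real^'m \<Rightarrow> real^'n^'n" where
  "Mmat P prm mu x s y = hessL P prm mu x y
     + transpose (jac P x) ** diagm (\<chi> i. y$i / s$i) ** jac P x"

definition psi :: "('n::finite,'m::finite) problem \<Rightarrow> 'm params \<Rightarrow> real \<Rightarrow> real^'n \<Rightarrow> real" where
  "psi P prm mu x = obj P x
     - mu * (\<Sum>i\<in>UNIV. beta1 prm * con P x $ i + ln (mu * wv prm $ i - con P x $ i))"

definition gradpsi :: "('n::finite,'m::finite) problem \<Rightarrow> 'm params \<Rightarrow> real \<Rightarrow> real^'n \<Rightarrow> real^'n" where
  "gradpsi P prm mu x = grad P x - (mu * beta1 prm) *\<^sub>R (transpose (jac P x) *v ones)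
     + mu *\<^sub>R (transpose (jac P x) *v (\<chi> i. 1 / (mu * wv prm $ i - con P x $ i)))"

definition phi :: "('n::finite,'m::finite) problem \<Rightarrow> 'm params \<Rightarrow> real \<Rightarrow> real^'n \<Rightarrow> real^'m \<Rightarrow> real^'m \<Rightarrow> real" where
  "phi P prm mu x s y = psi P prm mu x + linf (\<chi> i. s$i * y$i - mu) ^ 3 / mu ^ 2"

definition sigma :: "real^'m::finite \<Rightarrow> real" where
  "sigma y = 100 / max 100 (linf y)"

fun condC :: "('n::finite,'m::finite) problem \<Rightarrow> 'm params \<Rightarrow> ('n,'m) state \<Rightarrow> bool" where
  "condC P prm (x, s, y, mu) \<longleftrightarrow>
     (\<forall>i. s$i > 0) \<and> (\<forall>i. y$i > 0) \<and> mu > 0 \<and>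
     (\<forall>i. beta2 prm \<le> s$i * y$i / mu \<and> s$i * y$i / mu \<le> 1 / beta2 prm) \<and>
     con P x + s = mu *\<^sub>R wv prm"

fun termT1 :: "('n::finite,'m::finite) problem \<Rightarrow> 'm params \<Rightarrow> ('n,'m) state \<Rightarrow> bool" where
  "termT1 P prm (x, s, y, mu) \<longleftrightarrow>
     sigma y * linf (gradL P prm 0 x y) \<le> eps_opt prm \<and>
     sigma y * linf (\<chi> i. s$i * y$i) \<le> eps_opt prm \<and>
     linf (con P x + s) \<le> eps_opt prm"

fun termT2 :: "('n::finite,'m::finite) problem \<Rightarrow> 'm params \<Rightarrow> ('n,'m) state \<Rightarrow> bool" where
  "termT2 P prm (x, s, y, mu) \<longleftrightarrow>
     con P x \<bullet> y > 0 \<and>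
     l1 (transpose (jac P x) *v y) / (con P x \<bullet> y) \<le> eps_far prm \<and>
     (l1 (transpose (jac P x) *v y) + s \<bullet> y) / l1 y \<le> eps_inf prm"

fun termT3 :: "('n::finite,'m::finite) problem \<Rightarrow> 'm params \<Rightarrow> ('n,'m) state \<Rightarrow> bool" where
  "termT3 P prm (x, s, y, mu) \<longleftrightarrow> linf x \<ge> 1 / eps_unbd prm"

fun aggr :: "('n::finite,'m::finite) problem \<Rightarrow> 'm params \<Rightarrow> ('n,'m) state \<Rightarrow> bool" where
  "aggr P prm (x, s, y, mu) \<longleftrightarrow>
     sigma y * linf (gradL P prm mu x y) \<le> mu \<and>
     l1 (gradL P prm mu x y)
       \<le> l1 (grad P x - (beta1 prm * mu) *\<^sub>R (transpose (jac P x) *v ones)) + s \<bullet> y \<and>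
     (\<forall>i. beta3 prm \<le> s$i * y$i / mu \<and> s$i * y$i / mu \<le> 1 / beta3 prm)"

fun direction :: "('n::finite,'m::finite) problem \<Rightarrow> 'm params \<Rightarrow> real \<Rightarrow> real \<Rightarrow> ('n,'m) state
     \<Rightarrow> real^'n \<Rightarrow> real^'m \<Rightarrow> bool" where
  "direction P prm gam delta (x, s, y, mu) dx dy \<longleftrightarrow>
     (let Md = Mmat P prm mu x s y + delta *\<^sub>R mat 1;
          bD = gradL P prm (gam * mu) x y;
          bP = ((1 - gam) * mu) *\<^sub>R wv prm;
          bC = (\<chi> i. y$i * s$i - gam * mu)
      in posdef Md \<and>
         Md *v dx = - (bD + transpose (jac P x) *v (\<chi> i. (y$i * bP$i - bC$i) / s$i)) \<and>
         dy = - (\<chi> i. (y$i / s$i) * ((jac P x *v dx)$i + bP$i - bC$i / y$i)))"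

fun update :: "('n::finite,'m::finite) problem \<Rightarrow> 'm params \<Rightarrow> real \<Rightarrow> ('n,'m) state
     \<Rightarrow> real^'n \<Rightarrow> real^'m \<Rightarrow> real \<Rightarrow> real \<Rightarrow> ('n,'m) state" where
  "update P prm gam (x, s, y, mu) dx dy aP aD =
     (let mu' = (1 - (1 - gam) * aP) * mu; x' = x + aP *\<^sub>R dx
      in (x', mu' *\<^sub>R wv prm - con P x', y + aD *\<^sub>R dy, mu'))"

fun admissible :: "'m::finite params \<Rightarrow> ('n::finite,'m) state \<Rightarrow> bool" where
  "admissible prm (x, s, y, mu) \<longleftrightarrow>
     (\<forall>i. s$i > 0) \<and> (\<forall>i. y$i > 0) \<and> mu > 0 \<and>
     (\<forall>i. beta2 prm \<le> s$i * y$i / mu \<and> s$i * y$i / mu \<le> 1 / beta2 prm)"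

text \<open>theta(mu,s); the inner minimum over an empty index set is taken as +infinity.\<close>
definition theta :: "'m::finite params \<Rightarrow> real \<Rightarrow> real^'m \<Rightarrow> real" where
  "theta prm mu s =
     (if {i. wv prm $ i > 0} = {} then 1/2
      else min (1/2) ((beta3 prm - beta2 prm) / (2 * beta3 prm * mu)
                      * Min ((\<lambda>i. s$i / wv prm $ i) ` {i. wv prm $ i > 0})))"

fun alg2 :: "('n::finite,'m::finite) problem \<Rightarrow> 'm params \<Rightarrow> real \<Rightarrow> ('n,'m) state
     \<Rightarrow> ('n,'m) state \<Rightarrow> bool \<Rightarrow> bool" where
  "alg2 P prm delta (x, s, y, mu) st' succ \<longleftrightarrow>
     (\<exists>dx dy aP aD.
        direction P prm 0 delta (x, s, y, mu) dx dy \<and>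
        greatest_in {a \<in> {0..min (1/2) mu}.
            \<exists>b \<in> {0..1}. admissible prm (update P prm 0 (x, s, y, mu) dx dy a b)} aP \<and>
        greatest_in {b \<in> {0..1}. admissible prm (update P prm 0 (x, s, y, mu) dx dy aP b)} aD \<and>
        st' = update P prm 0 (x, s, y, mu) dx dy aP aD \<and>
        succ = (aP \<ge> theta prm mu s))"

fun alg3 :: "('n::finite,'m::finite) problem \<Rightarrow> 'm params \<Rightarrow> real \<Rightarrow> ('n,'m) state
     \<Rightarrow> ('n,'m) state \<Rightarrow> bool" where
  "alg3 P prm delta (x, s, y, mu) st' \<longleftrightarrow>
     (\<exists>dx dy aP.
        direction P prm 1 delta (x, s, y, mu) dx dy \<and>
        greatest_in {a \<in> {0..1}.
            admissible prm (update P prm 1 (x, s, y, mu) dx dy a a) \<and>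
            (case update P prm 1 (x, s, y, mu) dx dy a a of (x', s', y', mu') \<Rightarrow>
              phi P prm mu x' s' y'
                \<le> phi P prm mu x s y
                   + a * beta4 prm * ((1/2) * (gradpsi P prm mu x \<bullet> dx - (delta / 2) * a * (norm dx)\<^sup>2)
                                     - linf (\<chi> i. s$i * y$i - mu) ^ 3 / mu ^ 2))} aP \<and>
        st' = update P prm 1 (x, s, y, mu) dx dy aP aP)"

fun alg1_step :: "('n::finite,'m::finite) problem \<Rightarrow> 'm params \<Rightarrow> ('n,'m) state
     \<Rightarrow> ('n,'m) state \<Rightarrow> bool" where
  "alg1_step P prm (x, s, y, mu) st' \<longleftrightarrow>
     \<not> termT1 P prm (x, s, y, mu) \<and> \<not> termT2 P prm (x, s, y, mu) \<and> \<not> termT3 P prm (x, s, y, mu) \<and>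
     (let dmin = max 0 (mu - 2 * lmin (Mmat P prm mu x s y))
      in if aggr P prm (x, s, y, mu) then
           (if dmin = 0 \<and> (\<exists>st''. alg2 P prm 0 (x, s, y, mu) st'' True)
            then alg2 P prm 0 (x, s, y, mu) st' True
            else (\<exists>delta \<ge> dmin. alg2 P prm delta (x, s, y, mu) st' True))
         else alg3 P prm dmin (x, s, y, mu) st')"

end

theory Submission
  imports Defs
begin

lemma linf_ge: "\<bar>v$i\<bar> \<le> linf v"
  unfolding linf_def by (rule Max_ge) auto

lemma linf_le: "(\<And>i. \<bar>v$i\<bar> \<le> c) \<Longrightarrow> linf v \<le> c"
  unfolding linf_def by (subst Max_le_iff) auto

lemma linf_nonneg: "0 \<le> linf v"
  using linf_ge[of v] abs_ge_zero order_trans by blast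

lemma l1_ge: "\<bar>v$i\<bar> \<le> l1 v"
  unfolding l1_def by (rule member_le_sum) auto

lemma l1_nonneg: "0 \<le> l1 v"
  unfolding l1_def by (simp add: sum_nonneg)

lemma l1_add: "l1 (a + b) \<le> l1 a + l1 b"
  unfolding l1_def by (simp add: sum.distrib[symmetric] sum_mono abs_triangle_ineq)

lemma l1_diff: "l1 (a - b) \<le> l1 a + l1 b"
  unfolding l1_def by (simp add: sum.distrib[symmetric] sum_mono abs_triangle_ineq4)

lemma l1_scale: "l1 (c *\<^sub>R v) = \<bar>c\<bar> * l1 v"
  unfolding l1_def by (simp add: abs_mult sum_distrib_left)

lemma l1_ones: "l1 (ones :: real^'m::finite) = real CARD('m)"
  unfolding l1_def ones_def by simp

lemma tmv_comp: "(transpose A *v v) $ j = (\<Sum>i\<in>UNIV. A$i$j * v$i)"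
  by (simp add: matrix_vector_mult_def transpose_def)

lemma tmv_bound:
  fixes A :: "real^'n::finite^'m::finite"
  assumes "\<And>i j. \<bar>A$i$j\<bar> \<le> B"
  shows "\<bar>(transpose A *v v)$j\<bar> \<le> B * l1 v"
proof -
  have "\<bar>(transpose A *v v)$j\<bar> \<le> (\<Sum>i\<in>UNIV. \<bar>A$i$j * v$i\<bar>)"
    unfolding tmv_comp by (rule sum_abs)
  also have "\<dots> \<le> (\<Sum>i\<in>UNIV. B * \<bar>v$i\<bar>)"
    by (rule sum_mono) (simp add: abs_mult assms mult_right_mono)
  finally show ?thesis by (simp add: l1_def sum_distrib_left)
qed

lemma l1_tmv:
  fixes A :: "real^'n::finite^'m::finite"
  assumes "\<And>i j. \<bar>A$i$j\<bar> \<le> B"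
  shows "l1 (transpose A *v v) \<le> real CARD('n) * (B * l1 v)"
proof -
  have "l1 (transpose A *v v) \<le> (\<Sum>j\<in>(UNIV::'n set). B * l1 v)"
    using tmv_bound[OF assms] unfolding l1_def by (intro sum_mono) (simp add: l1_def)
  then show ?thesis by simp
qed

lemma l1_bound: "(\<And>i. \<bar>v$i\<bar> \<le> c) \<Longrightarrow> l1 (v::real^'m::finite) \<le> real CARD('m) * c"
proof -
  assume "\<And>i. \<bar>v$i\<bar> \<le> c"
  then have "l1 v \<le> (\<Sum>i\<in>(UNIV::'m set). c)" unfolding l1_def by (rule sum_mono)
  then show ?thesis by simp
qed

lemma gradL_comp: "gradL P prm mu x y $ j = grad P x $ j + (\<Sum>i\<in>UNIV. jac P x $ i $ j * (y$i - mu * beta1 prm))"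
  unfolding gradL_def vector_add_component tmv_comp by (simp add: ones_def)

lemma sigma_bounds: "0 < sigma y" "sigma y \<le> 1"
  unfolding sigma_def by (auto simp: divide_le_eq)

lemma T1_lemma:
  fixes P :: "('n::finite, 'm::finite) problem"
  assumes ag: "aggr P prm (x,s,y,mu)" and mu: "mu > 0"
    and eq: "con P x + s = mu *\<^sub>R wv prm"
    and Jb: "\<And>i j. \<bar>jac P x $ i $ j\<bar> \<le> Jb" "0 \<le> Jb"
    and W: "\<And>i. \<bar>wv prm $ i\<bar> \<le> W" "0 < W"
    and b1: "0 \<le> beta1 prm" and b3: "0 < beta3 prm"
    and m1: "mu \<le> eps_opt prm / (1 + beta1 prm * real CARD('m) * Jb)"
    and m2: "mu \<le> eps_opt prm * beta3 prm"
    and m3: "mu \<le> eps_opt prm / W"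
  shows "termT1 P prm (x,s,y,mu)"
proof -
  have sg: "0 < sigma y" "sigma y \<le> 1" by (rule sigma_bounds)+
  have a1: "sigma y * linf (gradL P prm mu x y) \<le> mu" using ag by simp
  have a3: "\<And>i. beta3 prm \<le> s$i * y$i / mu \<and> s$i * y$i / mu \<le> 1 / beta3 prm" using ag by simp
  define K where "K = beta1 prm * real CARD('m) * Jb"
  have K0: "0 \<le> K" unfolding K_def using b1 Jb by simp
  have cj: "\<bar>gradL P prm 0 x y $ j\<bar> \<le> linf (gradL P prm mu x y) + mu * K" for j
  proof -
    have "gradL P prm 0 x y $ j = gradL P prm mu x y $ j + (\<Sum>i\<in>UNIV. jac P x $ i $ j * (mu * beta1 prm))"
      unfolding gradL_comp by (simp add: algebra_simps sum.distrib[symmetric])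
    moreover have "\<bar>\<Sum>i\<in>UNIV. jac P x $ i $ j * (mu * beta1 prm)\<bar> \<le> mu * K"
    proof -
      have "\<bar>\<Sum>i\<in>UNIV. jac P x $ i $ j * (mu * beta1 prm)\<bar> \<le> (\<Sum>i\<in>UNIV. \<bar>jac P x $ i $ j * (mu * beta1 prm)\<bar>)"
        by (rule sum_abs)
      also have "\<dots> \<le> (\<Sum>i\<in>(UNIV::'m set). Jb * (mu * beta1 prm))"
        by (rule sum_mono) (use mu b1 Jb(1) in \<open>simp add: abs_mult mult_right_mono\<close>)
      finally show ?thesis by (simp add: K_def ac_simps)
    qed
    ultimately show ?thesis using linf_ge[of "gradL P prm mu x y" j] by linarith
  qed
  have "linf (gradL P prm 0 x y) \<le> linf (gradL P prm mu x y) + mu * K"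
    by (rule linf_le) (rule cj)
  then have "sigma y * linf (gradL P prm 0 x y) \<le> sigma y * linf (gradL P prm mu x y) + sigma y * (mu * K)"
    using sg by (simp add: distrib_left[symmetric] mult_left_mono)
  also have "\<dots> \<le> mu + mu * K"
    using a1 sg mu K0 by (smt (verit) mult_left_le_one_le mult_nonneg_nonneg)
  also have "\<dots> \<le> eps_opt prm"
  proof -
    have "mu * (1 + K) \<le> eps_opt prm" using m1 K0 unfolding K_def by (simp add: le_divide_eq mult.commute)
    then show ?thesis by (simp add: algebra_simps)
  qed
  finally have t1: "sigma y * linf (gradL P prm 0 x y) \<le> eps_opt prm" .
  have sy: "\<bar>s$i * y$i\<bar> \<le> mu / beta3 prm" for i
  proof -
    have "0 \<le> s$i * y$i / mu" using a3[of i] b3 by linarith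
    then have nn: "0 \<le> s$i * y$i" using mu by (simp add: zero_le_divide_iff)
    have "s$i * y$i / mu \<le> 1 / beta3 prm" using a3[of i] by simp
    then have "s$i * y$i \<le> mu / beta3 prm" using mu by (simp add: divide_le_eq field_simps)
    then show ?thesis using nn by simp
  qed
  have "linf (\<chi> i. s$i * y$i) \<le> mu / beta3 prm" by (rule linf_le) (simp add: sy)
  then have "sigma y * linf (\<chi> i. s$i * y$i) \<le> mu / beta3 prm"
    using sg linf_nonneg[of "\<chi> i. s$i * y$i"] by (smt (verit) mult_left_le_one_le)
  also have "\<dots> \<le> eps_opt prm" using m2 b3 by (simp add: divide_le_eq)
  finally have t2: "sigma y * linf (\<chi> i. s$i * y$i) \<le> eps_opt prm" .
  have "linf (con P x + s) \<le> mu * W"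
    unfolding eq by (rule linf_le) (use mu W(1) in \<open>simp add: abs_mult mult_left_mono\<close>)
  also have "\<dots> \<le> eps_opt prm" using m3 W(2) by (simp add: le_divide_eq)
  finally have t3: "linf (con P x + s) \<le> eps_opt prm" .
  show ?thesis using t1 t2 t3 by simp
qed

lemma T2_lemma:
  fixes P :: "('n::finite, 'm::finite) problem"
  assumes ag: "aggr P prm (x,s,y,mu)" and mu: "mu > 0"
    and spos: "\<And>i. s$i > 0" and ypos: "\<And>i. y$i > 0"
    and eq: "con P x + s = mu *\<^sub>R wv prm"
    and Jb: "\<And>i j. \<bar>jac P x $ i $ j\<bar> \<le> Jb" "0 \<le> Jb"
    and G: "\<And>j. \<bar>grad P x $ j\<bar> \<le> G" "0 \<le> G"
    and W: "\<And>i. 0 \<le> wv prm $ i" "\<And>i. wv prm $ i \<le> W" "0 < W"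
    and b1: "0 \<le> beta1 prm" and b3: "0 < beta3 prm"
    and ef: "0 < eps_far prm" and ei: "0 < eps_inf prm"
    and mu0: "mu \<le> mu0" and mus: "mus \<le> mu" "0 < mus"
    and D: "D = 2 * (real CARD('n) * G + beta1 prm * mu0 * (real CARD('n) * (Jb * real CARD('m)))) + real CARD('m) * mu0 / beta3 prm"
    and Q1: "real CARD('m) / beta3 prm + D / (eps_far prm * mus) + 1 \<le> Q"
    and Q2: "W * (D + real CARD('m) * mu0 / beta3 prm) / eps_inf prm \<le> Q"
    and wi: "0 < wv prm $ i" and si: "s$i * Q < beta3 prm * mu * wv prm $ i"
  shows "termT2 P prm (x,s,y,mu)"
proof -
  define E where "E = real CARD('m) * mu0 / beta3 prm"
  have a3: "\<And>i. beta3 prm \<le> s$i * y$i / mu \<and> s$i * y$i / mu \<le> 1 / beta3 prm" using ag by simp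
  have syl: "beta3 prm * mu \<le> s$j * y$j" for j
    using a3[of j] mu by (simp add: le_divide_eq)
  have syu: "s$j * y$j \<le> mu / beta3 prm" for j
  proof -
    have "s$j * y$j / mu \<le> 1 / beta3 prm" using a3[of j] by simp
    then show ?thesis using mu b3 by (simp add: divide_le_eq field_simps)
  qed
  have sy_def: "s \<bullet> y = (\<Sum>j\<in>UNIV. s$j * y$j)" by (simp add: inner_vec_def)
  have sy_nn: "0 \<le> s \<bullet> y" unfolding sy_def using spos ypos
    by (intro sum_nonneg) (simp add: less_imp_le)
  have "s \<bullet> y \<le> (\<Sum>j\<in>(UNIV::'m set). mu / beta3 prm)" unfolding sy_def by (rule sum_mono) (rule syu)
  then have sy_le: "s \<bullet> y \<le> real CARD('m) * mu / beta3 prm" by simp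
  have "real CARD('m) * mu / beta3 prm \<le> E" unfolding E_def using mu0 b3
    by (simp add: divide_right_mono mult_left_mono)
  then have sy_E: "s \<bullet> y \<le> E" using sy_le by linarith
  have wy: "Q \<le> wv prm $ i * y$i"
  proof -
    have "s$i * Q * y$i < beta3 prm * mu * wv prm $ i * y$i"
      using si ypos[of i] by (simp add: mult_strict_right_mono)
    moreover have "Q * (beta3 prm * mu) \<le> Q * (s$i * y$i)"
    proof -
      have "0 \<le> D" unfolding D using G(2) b1 Jb(2) mu mu0 b3 by simp
      then have "0 \<le> D / (eps_far prm * mus)" using ef mus by simp
      moreover have "0 \<le> real CARD('m) / beta3 prm" using b3 by simp
      ultimately have "0 \<le> Q" using Q1 by linarith
      then show ?thesis using syl[of i] by (simp add: mult_left_mono)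
    qed
    ultimately have "(beta3 prm * mu) * Q < (beta3 prm * mu) * (wv prm $ i * y$i)"
      by (simp add: algebra_simps)
    then show ?thesis using b3 mu by (simp add: mult_less_cancel_left_pos less_imp_le)
  qed
  define g where "g = grad P x - (beta1 prm * mu) *\<^sub>R (transpose (jac P x) *v ones)"
  have gL: "transpose (jac P x) *v y = gradL P prm mu x y - g"
    unfolding vec_eq_iff g_def vector_minus_component vector_scaleR_component tmv_comp gradL_comp
    by (simp add: ones_def algebra_simps sum_subtractf sum_distrib_left)
  have lg: "l1 g \<le> real CARD('n) * G + beta1 prm * mu0 * (real CARD('n) * (Jb * real CARD('m)))"
  proof -
    have "l1 g \<le> l1 (grad P x) + l1 ((beta1 prm * mu) *\<^sub>R (transpose (jac P x) *v ones))"
      unfolding g_def by (rule l1_diff)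
    also have "\<dots> = l1 (grad P x) + (beta1 prm * mu) * l1 (transpose (jac P x) *v ones)"
      using b1 mu by (simp add: l1_scale)
    also have "\<dots> \<le> real CARD('n) * G + (beta1 prm * mu0) * (real CARD('n) * (Jb * real CARD('m)))"
    proof (rule add_mono)
      show "l1 (grad P x) \<le> real CARD('n) * G" by (rule l1_bound) (rule G(1))
      have "l1 (transpose (jac P x) *v ones) \<le> real CARD('n) * (Jb * real CARD('m))"
        using l1_tmv[of "jac P x" Jb ones] Jb(1) by (simp add: l1_ones)
      moreover have "beta1 prm * mu \<le> beta1 prm * mu0" using b1 mu0 by (simp add: mult_left_mono)
      ultimately show "beta1 prm * mu * l1 (transpose (jac P x) *v ones)
          \<le> beta1 prm * mu0 * (real CARD('n) * (Jb * real CARD('m)))"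
        using b1 mu Jb(2) l1_nonneg[of "transpose (jac P x) *v ones"]
        by (meson mult_mono mult_nonneg_nonneg order_trans less_imp_le)
    qed
    finally show ?thesis by simp
  qed
  have a2: "l1 (gradL P prm mu x y) \<le> l1 g + s \<bullet> y" using ag by (simp add: g_def)
  have lJ: "l1 (transpose (jac P x) *v y) \<le> D"
  proof -
    have "l1 (transpose (jac P x) *v y) \<le> l1 (gradL P prm mu x y) + l1 g" unfolding gL by (rule l1_diff)
    then show ?thesis using a2 lg sy_E unfolding D E_def by (smt (verit))
  qed
  have D0: "0 \<le> D" using lJ l1_nonneg order_trans by blast
  have con_eq: "con P x = mu *\<^sub>R wv prm - s" using eq by (simp add: algebra_simps)
  have wy_sum: "wv prm $ i * y$i \<le> wv prm \<bullet> y"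
    unfolding inner_vec_def inner_real_def using W(1) ypos
    by (intro member_le_sum) (simp_all add: less_imp_le)
  have cy: "con P x \<bullet> y = mu * (wv prm \<bullet> y) - s \<bullet> y"
    unfolding con_eq by (simp add: inner_diff_left)
  have cy_ge: "mu * (Q - real CARD('m) / beta3 prm) \<le> con P x \<bullet> y"
  proof -
    have "mu * Q \<le> mu * (wv prm \<bullet> y)" using wy wy_sum mu by simp
    then show ?thesis using sy_le cy by (simp add: algebra_simps)
  qed
  have q: "D / (eps_far prm * mus) + 1 \<le> Q - real CARD('m) / beta3 prm" using Q1 by simp
  have cy_ge2: "mu * (D / (eps_far prm * mus) + 1) \<le> con P x \<bullet> y"
    using cy_ge q mu by (meson mult_left_mono less_imp_le order_trans)
  have pos1: "0 < mu * (D / (eps_far prm * mus) + 1)"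
    using mu D0 ef mus by (simp add: add_nonneg_pos)
  have T2a: "con P x \<bullet> y > 0" using cy_ge2 pos1 by linarith
  have "D \<le> eps_far prm * (mu * (D / (eps_far prm * mus)))"
  proof -
    have "eps_far prm * (mu * (D / (eps_far prm * mus))) = (mu / mus) * D" using ef mus by (simp add: field_simps)
    moreover have "1 \<le> mu / mus" using mus by simp
    moreover have "D \<le> (mu / mus) * D" using mus D0 by (simp add: le_divide_eq mult_left_mono mult.commute)
    ultimately show ?thesis by simp
  qed
  also have "\<dots> \<le> eps_far prm * (con P x \<bullet> y)"
  proof -
    have "mu * (D / (eps_far prm * mus) + 1) = mu * (D / (eps_far prm * mus)) + mu" by (simp add: distrib_left)
    then have "mu * (D / (eps_far prm * mus)) \<le> con P x \<bullet> y" using cy_ge2 mu by linarith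
    then show ?thesis by (rule mult_left_mono) (use ef in simp)
  qed
  finally have "l1 (transpose (jac P x) *v y) \<le> eps_far prm * (con P x \<bullet> y)" using lJ by linarith
  then have T2b: "l1 (transpose (jac P x) *v y) / (con P x \<bullet> y) \<le> eps_far prm"
    using T2a by (simp add: divide_le_eq mult.commute)
  have yi: "(D + E) / eps_inf prm \<le> y$i"
  proof -
    have "wv prm $ i * y$i \<le> W * y$i" using W(2)[of i] ypos[of i] by (simp add: mult_right_mono)
    then have "Q \<le> W * y$i" using wy by linarith
    then have "W * (D + E) / eps_inf prm \<le> W * y$i" using Q2 unfolding E_def by linarith
    then have "W * ((D + E) / eps_inf prm) \<le> W * y$i" by simp
    then show ?thesis using W(3) by (simp only: mult_le_cancel_left_pos)
  qed
  have ly: "y$i \<le> l1 y" using l1_ge[of y i] ypos[of i] by simp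
  have "l1 (transpose (jac P x) *v y) + s \<bullet> y \<le> D + E" using lJ sy_E by linarith
  also have "\<dots> \<le> eps_inf prm * l1 y"
  proof -
    have "(D + E) / eps_inf prm \<le> l1 y" using yi ly by linarith
    then show ?thesis using ei by (simp add: divide_le_eq mult.commute)
  qed
  finally have "l1 (transpose (jac P x) *v y) + s \<bullet> y \<le> eps_inf prm * l1 y" .
  moreover have "0 < l1 y" using ly ypos[of i] by linarith
  ultimately have T2c: "(l1 (transpose (jac P x) *v y) + s \<bullet> y) / l1 y \<le> eps_inf prm"
    by (simp add: divide_le_eq mult.commute)
  show ?thesis using T2a T2b T2c by simp
qed

lemma theta_bound:
  fixes s :: "real^'m::finite"
  assumes hs: "\<And>i. 0 < wv prm $ i \<Longrightarrow> beta3 prm * mu * wv prm $ i \<le> s$i * Q"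
    and Q: "0 < Q" and mu: "0 < mu" and b: "beta2 prm < beta3 prm" "0 < beta3 prm"
  shows "min (1/2) ((beta3 prm - beta2 prm) / (2 * Q)) \<le> theta prm mu s"
proof (cases "{i. wv prm $ i > 0} = {}")
  case True then show ?thesis by (simp add: theta_def)
next
  case False
  let ?I = "{i. wv prm $ i > 0}"
  have "beta3 prm * mu / Q \<le> Min ((\<lambda>i. s$i / wv prm $ i) ` ?I)"
  proof (subst Min_ge_iff)
    show "finite ((\<lambda>i. s$i / wv prm $ i) ` ?I)" by simp
    show "(\<lambda>i. s$i / wv prm $ i) ` ?I \<noteq> {}" using False by simp
    show "\<forall>a\<in>(\<lambda>i. s$i / wv prm $ i) ` ?I. beta3 prm * mu / Q \<le> a"
    proof
      fix a assume "a \<in> (\<lambda>i. s$i / wv prm $ i) ` ?I"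
      then obtain i where i: "0 < wv prm $ i" "a = s$i / wv prm $ i" by auto
      have "beta3 prm * mu * wv prm $ i \<le> s$i * Q" using hs i(1) .
      moreover have "s$i = (Q * a) * wv prm $ i / Q" using i Q by simp
      ultimately have "(beta3 prm * mu) * wv prm $ i \<le> (Q * a) * wv prm $ i" using Q by (simp add: ac_simps)
      then have "beta3 prm * mu \<le> Q * a" using i(1) by (simp only: mult_le_cancel_right_pos)
      then show "beta3 prm * mu / Q \<le> a" using Q by (simp add: divide_le_eq mult.commute)
    qed
  qed
  then have "(beta3 prm - beta2 prm) / (2 * beta3 prm * mu) * (beta3 prm * mu / Q)
      \<le> (beta3 prm - beta2 prm) / (2 * beta3 prm * mu) * Min ((\<lambda>i. s$i / wv prm $ i) ` ?I)"
    using b mu by (intro mult_left_mono) simp_all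
  moreover have "(beta3 prm - beta2 prm) / (2 * beta3 prm * mu) * (beta3 prm * mu / Q)
      = (beta3 prm - beta2 prm) / (2 * Q)" using b mu Q by (simp add: field_simps)
  ultimately have le: "(beta3 prm - beta2 prm) / (2 * Q)
      \<le> (beta3 prm - beta2 prm) / (2 * beta3 prm * mu) * Min ((\<lambda>i. s$i / wv prm $ i) ` ?I)" by linarith
  have "theta prm mu s = min (1/2) ((beta3 prm - beta2 prm) / (2 * beta3 prm * mu) * Min ((\<lambda>i. s$i / wv prm $ i) ` ?I))"
    unfolding theta_def using False by (simp only: if_not_P if_False)
  then show ?thesis by (simp only:) (rule min.mono[OF order_refl le])
qed

lemma alg2_facts:
  assumes "alg2 P prm delta (x,s,y,mu) st' True"
  shows "\<exists>x' s' y' aP. st' = (x',s',y',(1-aP)*mu) \<and> theta prm mu s \<le> aP \<and>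
     (\<forall>i. s'$i>0) \<and> (\<forall>i. y'$i>0) \<and> (1-aP)*mu > 0 \<and> con P x' + s' = ((1-aP)*mu) *\<^sub>R wv prm"
proof -
  obtain dx dy aP aD where
    g: "greatest_in {b \<in> {0..1}. admissible prm (update P prm 0 (x, s, y, mu) dx dy aP b)} aD"
    and st: "st' = update P prm 0 (x, s, y, mu) dx dy aP aD" and th: "theta prm mu s \<le> aP"
    using assms by auto
  have "admissible prm (update P prm 0 (x, s, y, mu) dx dy aP aD)" using g by (simp add: greatest_in_def)
  then show ?thesis using st th by (auto simp: Let_def)
qed

lemma alg3_facts:
  assumes "alg3 P prm delta (x,s,y,mu) st'"
  shows "\<exists>x' s' y'. st' = (x',s',y',mu) \<and>
     (\<forall>i. s'$i>0) \<and> (\<forall>i. y'$i>0) \<and> mu > 0 \<and> con P x' + s' = mu *\<^sub>R wv prm"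
proof -
  obtain dx dy aP where
    g: "admissible prm (update P prm 1 (x, s, y, mu) dx dy aP aP)"
    and st: "st' = update P prm 1 (x, s, y, mu) dx dy aP aP"
    using assms by (auto simp: greatest_in_def)
  then show ?thesis by (auto simp: Let_def)
qed

lemma alg1_facts:
  assumes "alg1_step P prm (x,s,y,mu) st'"
  shows "\<not> termT1 P prm (x,s,y,mu)" "\<not> termT2 P prm (x,s,y,mu)" "\<not> termT3 P prm (x,s,y,mu)"
    "aggr P prm (x,s,y,mu) \<Longrightarrow> \<exists>delta. alg2 P prm delta (x,s,y,mu) st' True"
    "\<not> aggr P prm (x,s,y,mu) \<Longrightarrow> \<exists>delta. alg3 P prm delta (x,s,y,mu) st'"
  using assms by (auto simp only: alg1_step.simps Let_def split: if_splits)

theorem corollary1: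
  fixes P :: "('n::finite, 'm::finite) problem"
    and prm :: "'m params"
    and run :: "nat \<Rightarrow> ('n, 'm) state"
  assumes f_diff: "\<And>x. (obj P has_derivative (\<lambda>h. grad P x \<bullet> h)) (at x)"
    and f_diff2: "\<And>x. (grad P has_derivative (\<lambda>h. hess P x *v h)) (at x)"
    and a_diff: "\<And>x. (con P has_derivative (\<lambda>h. jac P x *v h)) (at x)"
    and a_diff2: "\<And>i x. ((\<lambda>z. jac P z $ i) has_derivative (\<lambda>h. chess P i x *v h)) (at x)"
    and b1: "0 < beta1 prm" "beta1 prm < 1"
    and b2: "0 < beta2 prm" "beta2 prm < 1"
    and b3: "beta2 prm < beta3 prm" "beta3 prm < 1"
    and b4: "0 < beta4 prm" "beta4 prm < 1"
    and e_opt: "0 < eps_opt prm"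
    and e_far: "0 < eps_far prm" "eps_far prm < 1"
    and e_inf: "0 < eps_inf prm" "eps_inf prm < 1"
    and e_unbd: "0 < eps_unbd prm" "eps_unbd prm < 1"
    and w_nonneg: "\<And>i. 0 \<le> wv prm $ i"
    and init: "condC P prm (run 0)"
    and steps: "\<And>k. alg1_step P prm (run k) (run (Suc k))"
  shows "finite {k. aggr P prm (run k)}"
proof -
  have b30: "0 < beta3 prm" using b2 b3 by linarith
  define R where "R = 1 / eps_unbd prm"
  define Ks where "Ks = cball (0::real^'n) (real CARD('n) * R)"
  have inK: "x \<in> Ks" if "linf x < R" for x :: "real^'n"
  proof -
    have "l1 x \<le> real CARD('n) * R"
      by (rule l1_bound) (meson linf_ge that less_imp_le order_trans)
    moreover have "norm x \<le> l1 x" unfolding l1_def by (rule norm_le_l1_cart)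
    ultimately show ?thesis unfolding Ks_def by simp
  qed
  have cK: "compact Ks" unfolding Ks_def by simp
  have "continuous_on Ks (grad P)"
    by (rule continuous_at_imp_continuous_on) (use has_derivative_continuous[OF f_diff2] in blast)
  then have "bounded (grad P ` Ks)" using cK by (simp add: compact_continuous_image compact_imp_bounded)
  then obtain G0 where G0: "\<And>x. x \<in> Ks \<Longrightarrow> norm (grad P x) \<le> G0" unfolding bounded_iff by blast
  define G where "G = max 0 G0"
  have G: "\<And>x j. x \<in> Ks \<Longrightarrow> \<bar>grad P x $ j\<bar> \<le> G" "0 \<le> G"
    using G0 component_le_norm_cart order_trans unfolding G_def by (metis max.coboundedI2, simp)
  have "continuous_on Ks (\<lambda>z. \<chi> i. jac P z $ i)"
    by (rule continuous_on_vec_lambda, rule continuous_at_imp_continuous_on)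
       (use has_derivative_continuous[OF a_diff2] in blast)
  then have "continuous_on Ks (jac P)" by simp
  then have "bounded (jac P ` Ks)" using cK by (simp add: compact_continuous_image compact_imp_bounded)
  then obtain J0 where J0: "\<And>x. x \<in> Ks \<Longrightarrow> norm (jac P x) \<le> J0" unfolding bounded_iff by blast
  define Jb where "Jb = max 0 J0"
  have Jb: "\<And>x i j. x \<in> Ks \<Longrightarrow> \<bar>jac P x $ i $ j\<bar> \<le> Jb" "0 \<le> Jb"
  proof -
    fix x i j assume "x \<in> Ks"
    have "\<bar>jac P x $ i $ j\<bar> \<le> norm (jac P x $ i)" by (rule component_le_norm_cart)
    also have "\<dots> \<le> norm (jac P x)" by (rule Finite_Cartesian_Product.norm_nth_le)
    also have "\<dots> \<le> Jb" using J0[OF \<open>x \<in> Ks\<close>] unfolding Jb_def by simp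
    finally show "\<bar>jac P x $ i $ j\<bar> \<le> Jb" .
  qed (simp add: Jb_def)
  define W where "W = linf (wv prm) + 1"
  have W: "\<And>i. \<bar>wv prm $ i\<bar> \<le> W" "\<And>i. wv prm $ i \<le> W" "0 < W"
  proof -
    fix i
    show "\<bar>wv prm $ i\<bar> \<le> W" using linf_ge[of "wv prm" i] unfolding W_def by linarith
    then show "wv prm $ i \<le> W" by linarith
  next
    show "0 < W" using linf_nonneg[of "wv prm"] unfolding W_def by linarith
  qed
  define mu0 where "mu0 = snd (snd (snd (run 0)))"
  have mu0: "0 < mu0" using init unfolding mu0_def by (cases "run 0") auto
  define mus where "mus = min (eps_opt prm / (1 + beta1 prm * real CARD('m) * Jb))
                       (min (eps_opt prm * beta3 prm) (eps_opt prm / W))"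
  have mus0: "0 < mus" unfolding mus_def using e_opt b1 Jb(2) b30 W(3)
    by (simp add: add_pos_nonneg)
  define D where "D = 2 * (real CARD('n) * G + beta1 prm * mu0 * (real CARD('n) * (Jb * real CARD('m)))) + real CARD('m) * mu0 / beta3 prm"
  have D0: "0 \<le> D" unfolding D_def using G(2) b1 Jb(2) mu0 b30 by simp
  define Q where "Q = max (real CARD('m) / beta3 prm + D / (eps_far prm * mus) + 1)
                          (W * (D + real CARD('m) * mu0 / beta3 prm) / eps_inf prm)"
  have Q0: "0 < Q"
  proof -
    have "0 \<le> D / (eps_far prm * mus)" using D0 e_far mus0 by simp
    moreover have "0 \<le> real CARD('m) / beta3 prm" using b30 by simp
    ultimately show ?thesis unfolding Q_def by linarith
  qed
  define th where "th = min (1/2) ((beta3 prm - beta2 prm) / (2 * Q))"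
  have th: "0 < th" "th \<le> 1/2" unfolding th_def using b3 Q0 by auto
  have good: "mus < mu \<and> th \<le> theta prm mu s"
    if st: "\<forall>i. s$i > 0" "\<forall>i. y$i > 0" "mu > 0" "con P x + s = mu *\<^sub>R wv prm" "mu \<le> mu0"
      and ag: "aggr P prm (x,s,y,mu)"
      and nt: "\<not> termT1 P prm (x,s,y,mu)" "\<not> termT2 P prm (x,s,y,mu)" "\<not> termT3 P prm (x,s,y,mu)"
    for x s y mu
  proof -
    have xK: "x \<in> Ks" using nt(3) inK unfolding R_def by force
    have m1: "mus < mu"
    proof (rule ccontr)
      assume "\<not> mus < mu"
      then have "mu \<le> mus" by simp
      then have "termT1 P prm (x,s,y,mu)"
        using T1_lemma[OF ag st(3) st(4) Jb(1)[OF xK] Jb(2) W(1) W(3) _ b30]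
              b1(1) unfolding mus_def by simp
      then show False using nt(1) by simp
    qed
    have hs: "beta3 prm * mu * wv prm $ i \<le> s$i * Q" if "0 < wv prm $ i" for i
    proof (rule ccontr)
      assume "\<not> ?thesis"
      then have si: "s$i * Q < beta3 prm * mu * wv prm $ i" by simp
      have "termT2 P prm (x,s,y,mu)"
        by (rule T2_lemma[OF ag st(3) _ _ st(4) Jb(1)[OF xK] Jb(2) G(1)[OF xK] G(2) w_nonneg W(2) W(3)
              _ b30 e_far(1) e_inf(1) st(5) less_imp_le[OF m1] mus0 D_def _ _ that si])
           (use st b1 in \<open>auto simp: Q_def\<close>)
      then show False using nt(2) by simp
    qed
    have "th \<le> theta prm mu s" unfolding th_def
      by (rule theta_bound[OF hs Q0 st(3) b3(1) b30])
    then show ?thesis using m1 by simp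
  qed
  define N where "N k = card {j. j < k \<and> aggr P prm (run j)}" for k
  have finN: "finite {j. j < k \<and> aggr P prm (run j)}" for k by simp
  define Inv where "Inv k \<longleftrightarrow> (case run k of (x,s,y,mu) \<Rightarrow>
      (\<forall>i. s$i > 0) \<and> (\<forall>i. y$i > 0) \<and> mu > 0 \<and> con P x + s = mu *\<^sub>R wv prm
      \<and> mu \<le> mu0 * (1 - th) ^ N k)" for k
  have inv: "Inv k" for k
  proof (induction k)
    case 0
    show ?case using init unfolding Inv_def N_def mu0_def by (cases "run 0") auto
  next
    case (Suc k)
    obtain x s y mu where rk: "run k = (x,s,y,mu)" by (cases "run k") auto
    have I: "\<forall>i. s$i > 0" "\<forall>i. y$i > 0" "mu > 0" "con P x + s = mu *\<^sub>R wv prm"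
      "mu \<le> mu0 * (1 - th) ^ N k"
      using Suc.IH rk unfolding Inv_def by auto
    have pw: "(1 - th) ^ N k \<le> 1" using th by (simp add: power_le_one)
    have mle: "mu \<le> mu0" using I(5) pw mu0 by (smt (verit) mult_left_le)
    have stp: "alg1_step P prm (x,s,y,mu) (run (Suc k))" using steps[of k] rk by simp
    note F = alg1_facts[OF stp]
    have Nset: "{j. j < Suc k \<and> aggr P prm (run j)} =
       (if aggr P prm (run k) then insert k {j. j < k \<and> aggr P prm (run j)} else {j. j < k \<and> aggr P prm (run j)})"
      by (auto simp: less_Suc_eq)
    show ?case
    proof (cases "aggr P prm (x,s,y,mu)")
      case True
      have NS: "N (Suc k) = Suc (N k)" unfolding N_def Nset using True rk by simp
      obtain delta where "alg2 P prm delta (x,s,y,mu) (run (Suc k)) True" using F(4)[OF True] by blast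
      from alg2_facts[OF this] obtain x' s' y' aP where
        A: "run (Suc k) = (x',s',y',(1-aP)*mu)" "theta prm mu s \<le> aP"
           "\<forall>i. s'$i>0" "\<forall>i. y'$i>0" "(1-aP)*mu > 0" "con P x' + s' = ((1-aP)*mu) *\<^sub>R wv prm"
        by blast
      have "th \<le> theta prm mu s" using good[OF I(1-4) mle True F(1-3)] by simp
      then have "(1-aP)*mu \<le> (1-th)*mu" using A(2) I(3) by (simp add: mult_right_mono)
      also have "\<dots> \<le> (1-th) * (mu0 * (1 - th) ^ N k)" using I(5) th by (simp add: mult_left_mono)
      also have "\<dots> = mu0 * (1 - th) ^ N (Suc k)" unfolding NS by simp
      finally show ?thesis using A unfolding Inv_def by simp
    next
      case False
      have NS: "N (Suc k) = N k" unfolding N_def Nset using False rk by simp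
      obtain delta where "alg3 P prm delta (x,s,y,mu) (run (Suc k))" using F(5)[OF False] by blast
      from alg3_facts[OF this] obtain x' s' y' where
        A: "run (Suc k) = (x',s',y',mu)" "\<forall>i. s'$i>0" "\<forall>i. y'$i>0" "mu > 0" "con P x' + s' = mu *\<^sub>R wv prm"
        by blast
      show ?thesis using A I(5) NS unfolding Inv_def by simp
    qed
  qed
  show ?thesis
  proof (rule ccontr)
    assume inf: "\<not> finite {k. aggr P prm (run k)}"
    obtain n where n: "(1 - th) ^ n < mus / mu0" using real_arch_pow_inv[of "mus / mu0" "1 - th"] mus0 mu0 th by auto
    obtain B where B: "finite B" "card B = n" "B \<subseteq> {k. aggr P prm (run k)}"
      using infinite_arbitrarily_large[OF inf] by blast
    obtain m where m: "\<forall>b\<in>B. b \<le> m" using B(1) finite_nat_set_iff_bounded_le by blast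
    obtain k where k: "k > m" "aggr P prm (run k)" using inf unfolding infinite_nat_iff_unbounded by blast
    have "B \<subseteq> {j. j < k \<and> aggr P prm (run j)}" using B(3) m k(1) by force
    then have nN: "n \<le> N k" unfolding N_def using B(2) card_mono[OF finN] by metis
    obtain x s y mu where rk: "run k = (x,s,y,mu)" by (cases "run k") auto
    have I: "\<forall>i. s$i > 0" "\<forall>i. y$i > 0" "mu > 0" "con P x + s = mu *\<^sub>R wv prm"
      "mu \<le> mu0 * (1 - th) ^ N k"
      using inv[of k] rk unfolding Inv_def by auto
    have pw: "(1 - th) ^ N k \<le> (1 - th) ^ n" using th nN by (simp add: power_decreasing)
    have pw1: "(1 - th) ^ n \<le> 1" using th by (simp add: power_le_one)
    have mle: "mu \<le> mu0" using I(5) pw pw1 mu0 by (smt (verit) mult_left_le)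
    have stp: "alg1_step P prm (x,s,y,mu) (run (Suc k))" using steps[of k] rk by simp
    note F = alg1_facts[OF stp]
    have "mus < mu" using good[OF I(1-4) mle _ F(1-3)] k(2) rk by simp
    moreover have "mu < mus"
    proof -
      have "mu \<le> mu0 * (1 - th) ^ n" using I(5) pw mu0 by (smt (verit) mult_left_mono)
      also have "\<dots> < mu0 * (mus / mu0)" by (rule mult_strict_left_mono[OF n mu0])
      finally show ?thesis using mu0 by simp
    qed
    ultimately show False by simp
  qed
qed

end
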